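(* Let $A,B$ be closed linear relations in $X^2$ such that $\{A,B\}$ is a dual pair with $(A^* )_s|_{D(B)}=B_s$ and $(B^* )_s|_{D(A)}=A_s$. If $B^*(0)\cap N(A^* )=\{0\}$ and $A^*(0)\cap N(B^* )=\{0\}$, then $n(A^*,B)=n(B^*,A)$, where $n(A^*,B)=\dim(D(A^* )/D(B))$ and $n(B^*,A)=\dim(D(B^* )/D(A))$.
   Context: $X$ is a complex Hilbert space; linear relations are linear subspaces of $X^2=X\times X$, with domain $D(T)$, $N(T)=\{x:(x,0)\in T\}$, $T(0)=\{y:(0,y)\in T\}$. Adjoint: $T^*=\{(f,g):\langle g,x\rangle=\langle f,y\rangle\ \forall(x,y)\in T\}$. For closed $T$: $T_\infty=\{(0,y)\in T\}$ and $T_s=T\ominus T_\infty$ (orthogonal complement in $T$), an operator with $D(T_s)=D(T)$. Closed relations $A,B$ form a dual pair if $A\subset B^*$ (equivalently $B\subset A^*$). $(A^* )_s|_{D(B)}=B_s$ means the restriction of the operator $(A^* )_s$ to $D(B)$ is $B_s$. *)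

theory Defs
  imports "HOL-Analysis.Analysis" "HOL-Library.Extended_Nat"
begin

text \<open>A complex Hilbert space: a real Banach space 'a equipped with a complex
scalar multiplication sC (extending the real one) and a complex inner product ip
(linear in the first, conjugate-linear in the second argument) inducing the norm.\<close>

locale complex_hilbert =
  fixes sC :: "complex \<Rightarrow> 'a::banach \<Rightarrow> 'a"
    and ip :: "'a \<Rightarrow> 'a \<Rightarrow> complex"
  assumes sC_add_right: "\<And>a x y. sC a (x + y) = sC a x + sC a y"
    and sC_add_left: "\<And>a b x. sC (a + b) x = sC a x + sC b x"
    and sC_sC: "\<And>a b x. sC a (sC b x) = sC (a * b) x"
    and sC_one: "\<And>x. sC 1 x = x"
    and sC_of_real: "\<And>r x. sC (complex_of_real r) x = scaleR r x"
    and ip_add_left: "\<And>x y z. ip (x + y) z = ip x z + ip y z"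
    and ip_sC_left: "\<And>a x y. ip (sC a x) y = a * ip x y"
    and ip_sym: "\<And>x y. ip y x = cnj (ip x y)"
    and ip_norm: "\<And>x. ip x x = complex_of_real ((norm x)\<^sup>2)"

definition lin_rel :: "(complex \<Rightarrow> 'a \<Rightarrow> 'a) \<Rightarrow> ('a::ab_group_add \<times> 'a) set \<Rightarrow> bool" where
  "lin_rel sC T \<longleftrightarrow> (0, 0) \<in> T
     \<and> (\<forall>p\<in>T. \<forall>q\<in>T. (fst p + fst q, snd p + snd q) \<in> T)
     \<and> (\<forall>c. \<forall>p\<in>T. (sC c (fst p), sC c (snd p)) \<in> T)"

definition closed_lin_rel :: "(complex \<Rightarrow> 'a \<Rightarrow> 'a) \<Rightarrow> ('a::real_normed_vector \<times> 'a) set \<Rightarrow> bool" where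
  "closed_lin_rel sC T \<longleftrightarrow> lin_rel sC T \<and> closed T"

definition rdom :: "('a \<times> 'a) set \<Rightarrow> 'a set" where
  "rdom T = {x. \<exists>y. (x, y) \<in> T}"

definition rker :: "('a::zero \<times> 'a) set \<Rightarrow> 'a set" where
  "rker T = {x. (x, 0) \<in> T}"

definition rmul :: "('a::zero \<times> 'a) set \<Rightarrow> 'a set" where
  "rmul T = {y. (0, y) \<in> T}"

definition radj :: "('a \<Rightarrow> 'a \<Rightarrow> complex) \<Rightarrow> ('a \<times> 'a) set \<Rightarrow> ('a \<times> 'a) set" where
  "radj ip T = {(f, g). \<forall>(x, y)\<in>T. ip g x = ip f y}"

definition pip :: "('a \<Rightarrow> 'a \<Rightarrow> complex) \<Rightarrow> 'a \<times> 'a \<Rightarrow> 'a \<times> 'a \<Rightarrow> complex" where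
  "pip ip p q = ip (fst p) (fst q) + ip (snd p) (snd q)"

definition rinf :: "('a::zero \<times> 'a) set \<Rightarrow> ('a \<times> 'a) set" where
  "rinf T = {p \<in> T. fst p = 0}"

definition rs :: "('a \<Rightarrow> 'a \<Rightarrow> complex) \<Rightarrow> ('a::zero \<times> 'a) set \<Rightarrow> ('a \<times> 'a) set" where
  "rs ip T = {p \<in> T. \<forall>q \<in> rinf T. pip ip p q = 0}"

definition rrestrict :: "('a \<times> 'a) set \<Rightarrow> 'a set \<Rightarrow> ('a \<times> 'a) set" where
  "rrestrict T S = {p \<in> T. fst p \<in> S}"

definition dual_pair :: "(complex \<Rightarrow> 'a \<Rightarrow> 'a) \<Rightarrow> ('a \<Rightarrow> 'a \<Rightarrow> complex)
    \<Rightarrow> ('a::real_normed_vector \<times> 'a) set \<Rightarrow> ('a \<times> 'a) set \<Rightarrow> bool" where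
  "dual_pair sC ip A B \<longleftrightarrow> closed_lin_rel sC A \<and> closed_lin_rel sC B \<and> A \<subseteq> radj ip B"

text \<open>Dimension of the quotient space V/M (M \<subseteq> V subspaces), valued in
  {0,1,2,...,\<infinity>}: the supremum of the sizes of finite subsets of V that are
  complex-linearly independent modulo M.\<close>
definition indep_mod :: "(complex \<Rightarrow> 'a \<Rightarrow> 'a) \<Rightarrow> 'a::comm_monoid_add set \<Rightarrow> 'a set \<Rightarrow> bool" where
  "indep_mod sC M L \<longleftrightarrow> finite L \<and>
     (\<forall>c. (\<Sum>l\<in>L. sC (c l) l) \<in> M \<longrightarrow> (\<forall>l\<in>L. c l = 0))"

definition quot_dim :: "(complex \<Rightarrow> 'a \<Rightarrow> 'a) \<Rightarrow> 'a::comm_monoid_add set \<Rightarrow> 'a set \<Rightarrow> enat" where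
  "quot_dim sC V M = Sup {enat (card L) | L. L \<subseteq> V \<and> indep_mod sC M L}"

end

theory Submission
  imports Defs
begin


definition subsp :: "(complex \<Rightarrow> 'a \<Rightarrow> 'a) \<Rightarrow> 'a::ab_group_add set \<Rightarrow> bool" where
  "subsp sC M \<longleftrightarrow> 0 \<in> M \<and> (\<forall>x\<in>M. \<forall>y\<in>M. x + y \<in> M) \<and> (\<forall>c. \<forall>x\<in>M. sC c x \<in> M)"

context complex_hilbert
begin

lemma sC_zero_left[simp]: "sC 0 x = 0"
  using sC_of_real[of 0 x] by simp

lemma sC_zero_right[simp]: "sC a 0 = 0"
  using sC_add_right[of a 0 0] by simp

lemma sC_minus_left: "sC (-a) x = - sC a x"
  using sC_add_left[of a "-a" x] by (simp add: eq_neg_iff_add_eq_0 add.commute)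

lemma sC_minus_one: "sC (-1) x = - x"
  using sC_minus_left[of 1 x] sC_one by simp

lemma sC_diff_right: "sC a (x - y) = sC a x - sC a y"
  using sC_add_right[of a "x - y" y] by (simp add: eq_diff_eq)

lemma sC_sum: "sC a (sum f S) = (\<Sum>i\<in>S. sC a (f i))"
  by (induct S rule: infinite_finite_induct) (simp_all add: sC_add_right)

lemma ip_zero_left[simp]: "ip 0 y = 0"
  using ip_add_left[of 0 0 y] by simp

lemma ip_add_right: "ip x (y + z) = ip x y + ip x z"
proof -
  have "ip x (y + z) = cnj (ip (y + z) x)" by (rule ip_sym)
  also have "\<dots> = cnj (ip y x) + cnj (ip z x)" by (simp add: ip_add_left)
  also have "\<dots> = ip x y + ip x z" by (metis ip_sym)
  finally show ?thesis .
qed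

lemma ip_zero_right[simp]: "ip x 0 = 0"
  using ip_add_right[of x 0 0] by simp

lemma ip_sC_right: "ip x (sC a y) = cnj a * ip x y"
proof -
  have "ip x (sC a y) = cnj (ip (sC a y) x)" by (rule ip_sym)
  also have "\<dots> = cnj a * cnj (ip y x)" by (simp add: ip_sC_left)
  also have "\<dots> = cnj a * ip x y" by (metis ip_sym)
  finally show ?thesis .
qed

lemma ip_minus_left: "ip (- x) y = - ip x y"
  using ip_add_left[of x "-x" y] by (simp add: eq_neg_iff_add_eq_0 add.commute)

lemma ip_minus_right: "ip x (- y) = - ip x y"
  using ip_add_right[of x y "-y"] by (simp add: eq_neg_iff_add_eq_0 add.commute)

lemma ip_diff_left: "ip (x - y) z = ip x z - ip y z"
  using ip_add_left[of x "-y" z] ip_minus_left by simp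

lemma ip_diff_right: "ip x (y - z) = ip x y - ip x z"
  using ip_add_right[of x y "-z"] ip_minus_right by simp

lemma ip_sum_left: "ip (sum f S) y = (\<Sum>i\<in>S. ip (f i) y)"
  by (induct S rule: infinite_finite_induct) (simp_all add: ip_add_left)

lemma ip_sum_right: "ip y (sum f S) = (\<Sum>i\<in>S. ip y (f i))"
  by (induct S rule: infinite_finite_induct) (simp_all add: ip_add_right)

lemma ip_self_eq_0: "ip x x = 0 \<longleftrightarrow> x = 0"
  using ip_norm[of x] by simp

lemma parallelogram:
  fixes x y :: 'a
  shows "(norm (x+y))\<^sup>2 + (norm (x-y))\<^sup>2 = 2*(norm x)\<^sup>2 + 2*(norm y)\<^sup>2"
proof -
  have "complex_of_real ((norm (x+y))\<^sup>2 + (norm (x-y))\<^sup>2) = ip (x+y) (x+y) + ip (x-y) (x-y)"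
    by (simp add: ip_norm)
  also have "\<dots> = 2 * ip x x + 2 * ip y y"
    by (simp add: ip_add_left ip_add_right ip_diff_left ip_diff_right)
  also have "\<dots> = complex_of_real (2*(norm x)\<^sup>2 + 2*(norm y)\<^sup>2)"
    by (simp add: ip_norm)
  finally show ?thesis by (simp only: of_real_eq_iff)
qed

lemma subspD:
  assumes "subsp sC M"
  shows "0 \<in> M" "x \<in> M \<Longrightarrow> y \<in> M \<Longrightarrow> x + y \<in> M" "x \<in> M \<Longrightarrow> sC c x \<in> M"
    "x \<in> M \<Longrightarrow> - x \<in> M" "x \<in> M \<Longrightarrow> y \<in> M \<Longrightarrow> x - y \<in> M" "x \<in> M \<Longrightarrow> scaleR r x \<in> M"
proof -
  show "0 \<in> M" "x \<in> M \<Longrightarrow> y \<in> M \<Longrightarrow> x + y \<in> M" "x \<in> M \<Longrightarrow> sC c x \<in> M"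
    using assms unfolding subsp_def by auto
  show neg: "x \<in> M \<Longrightarrow> - x \<in> M" for x
    using assms unfolding subsp_def by (metis sC_minus_one)
  show "x \<in> M \<Longrightarrow> y \<in> M \<Longrightarrow> x - y \<in> M"
    using assms neg[of y] unfolding subsp_def by (metis diff_conv_add_uminus)
  show "x \<in> M \<Longrightarrow> scaleR r x \<in> M"
    using assms unfolding subsp_def by (metis sC_of_real)
qed

lemma subsp_sum:
  assumes "subsp sC M" "\<And>i. i \<in> S \<Longrightarrow> f i \<in> M"
  shows "sum f S \<in> M"
  using assms(2)
proof (induct S rule: infinite_finite_induct)
  case (infinite A) then show ?case using subspD(1)[OF assms(1)] by simp
next
  case empty then show ?case using subspD(1)[OF assms(1)] by simp
next
  case (insert x F) then show ?case using subspD(2)[OF assms(1)] by simp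
qed

end




context complex_hilbert
begin

lemma min_orth:
  fixes y m :: 'a
  assumes M: "subsp sC M" and mM: "m \<in> M"
    and min: "\<And>m'. m' \<in> M \<Longrightarrow> (norm (y - m))\<^sup>2 \<le> (norm (y - m'))\<^sup>2"
    and zM: "z \<in> M"
  shows "ip (y - m) z = 0"
proof (cases "z = 0")
  case True then show ?thesis by simp
next
  case False
  define r where "r = y - m"
  define a where "a = ip r z"
  define b where "b = (norm z)\<^sup>2"
  have bpos: "b > 0" using False by (simp add: b_def)
  define t where "t = a / complex_of_real b"
  have m'M: "m + sC t z \<in> M" using subspD[OF M] mM zM by blast
  have eq: "y - (m + sC t z) = r - sC t z" by (simp add: r_def)
  have zz: "ip z z = complex_of_real b" by (simp add: ip_norm b_def)
  have zr: "ip z r = cnj a" unfolding a_def by (rule ip_sym)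
  have "complex_of_real ((norm (r - sC t z))\<^sup>2) = ip (r - sC t z) (r - sC t z)"
    by (simp add: ip_norm)
  also have "\<dots> = ip r r - cnj t * a - t * cnj a + t * cnj t * complex_of_real b"
    by (simp add: ip_diff_left ip_diff_right ip_sC_left ip_sC_right zz zr a_def[symmetric] algebra_simps)
  also have "\<dots> = ip r r - a * cnj a / complex_of_real b"
    using bpos by (simp add: t_def field_simps)
  also have "a * cnj a = complex_of_real ((cmod a)\<^sup>2)"
    using complex_norm_square[of a] by (simp add: of_real_power)
  finally have "complex_of_real ((norm (r - sC t z))\<^sup>2) = complex_of_real ((norm r)\<^sup>2 - (cmod a)\<^sup>2 / b)"
    by (simp add: ip_norm)
  then have e2: "(norm (r - sC t z))\<^sup>2 = (norm r)\<^sup>2 - (cmod a)\<^sup>2 / b"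
    by (simp only: of_real_eq_iff)
  have "(norm r)\<^sup>2 \<le> (norm (r - sC t z))\<^sup>2"
    using min[OF m'M] eq r_def by simp
  with e2 have "(cmod a)\<^sup>2 / b \<le> 0" by simp
  with bpos have "(cmod a)\<^sup>2 \<le> 0" by (simp add: divide_le_0_iff)
  then have "a = 0" by simp
  then show ?thesis by (simp add: a_def r_def)
qed


lemma proj:
  fixes y :: 'a
  assumes M: "subsp sC M" and cl: "closed M"
  shows "\<exists>m\<in>M. \<forall>z\<in>M. ip (y - m) z = 0"
proof -
  define D where "D = (\<lambda>m. norm (y - m)) ` M"
  define d where "d = Inf D"
  have M0: "0 \<in> M" using subspD[OF M] by simp
  have Dne: "D \<noteq> {}" using M0 unfolding D_def by blast
  have Dbdd: "bdd_below D" unfolding D_def by (rule bdd_belowI[of _ 0]) auto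
  have dle: "d \<le> norm (y - m)" if "m \<in> M" for m
    unfolding d_def using that Dbdd by (auto simp: D_def intro!: cInf_lower)
  have d0: "0 \<le> d" unfolding d_def using Dne by (auto simp: D_def intro!: cInf_greatest)
  have ex: "\<exists>m\<in>M. (norm (y - m))\<^sup>2 < d\<^sup>2 + 1 / real (Suc n)" for n
  proof -
    have "d < sqrt (d\<^sup>2 + 1 / real (Suc n))"
      using d0 by (intro real_less_rsqrt) simp
    then obtain x where "x \<in> D" "x < sqrt (d\<^sup>2 + 1 / real (Suc n))"
      using cInf_less_iff[OF Dne Dbdd] unfolding d_def by blast
    then obtain m where "m \<in> M" "norm (y - m) < sqrt (d\<^sup>2 + 1 / real (Suc n))"
      by (auto simp: D_def)
    then show ?thesis
    proof -
      have "(norm (y - m))\<^sup>2 < (sqrt (d\<^sup>2 + 1 / real (Suc n)))\<^sup>2"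
        using \<open>norm (y - m) < _\<close> by (intro power_strict_mono) simp_all
      also have "\<dots> = d\<^sup>2 + 1 / real (Suc n)" by simp
      finally show ?thesis using \<open>m \<in> M\<close> by blast
    qed
  qed
  define X where "X n = (SOME m. m \<in> M \<and> (norm (y - m))\<^sup>2 < d\<^sup>2 + 1 / real (Suc n))" for n
  have Xn: "X n \<in> M \<and> (norm (y - X n))\<^sup>2 < d\<^sup>2 + 1 / real (Suc n)" for n
    unfolding X_def using ex[of n] by (rule someI_ex[OF bexE]) blast
  have X: "\<And>n. X n \<in> M" "\<And>n. (norm (y - X n))\<^sup>2 < d\<^sup>2 + 1 / real (Suc n)"
    using Xn by auto
  have key: "(norm (X n - X k))\<^sup>2 \<le> 2 / real (Suc n) + 2 / real (Suc k)" for n k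
  proof -
    define mid where "mid = scaleR (1/2) (X n + X k)"
    have midM: "mid \<in> M" unfolding mid_def by (intro subspD(6)[OF M] subspD(2)[OF M] X(1))
    have h1: "(y - X n) + (y - X k) = scaleR 2 (y - mid)"
      by (simp add: mid_def algebra_simps scaleR_2)
    have h2: "(y - X n) - (y - X k) = X k - X n" by simp
    have "(norm (scaleR 2 (y - mid)))\<^sup>2 + (norm (X k - X n))\<^sup>2
          = 2 * (norm (y - X n))\<^sup>2 + 2 * (norm (y - X k))\<^sup>2"
      using parallelogram[of "y - X n" "y - X k"] h1 h2 by simp
    moreover have "(norm (scaleR 2 (y - mid)))\<^sup>2 = 4 * (norm (y - mid))\<^sup>2"
      by (simp add: power2_eq_square)
    moreover have "d\<^sup>2 \<le> (norm (y - mid))\<^sup>2"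
      using dle[OF midM] d0 by (simp add: power_mono)
    moreover have "(norm (X k - X n))\<^sup>2 = (norm (X n - X k))\<^sup>2" by (simp add: norm_minus_commute)
    ultimately show ?thesis using X(2)[of n] X(2)[of k] by linarith
  qed
  have "Cauchy X"
  proof (rule metric_CauchyI)
    fix e :: real assume e: "e > 0"
    obtain N :: nat where N: "4 / (e * e) < real N" using reals_Archimedean2 by blast
    have "dist (X m) (X n) < e" if "m \<ge> N" "n \<ge> N" for m n
    proof -
      have "2 / real (Suc m) \<le> 2 / real (Suc N)" "2 / real (Suc n) \<le> 2 / real (Suc N)"
        using that by (simp_all add: frac_le)
      moreover have "4 / real (Suc N) < e * e"
      proof -
        have "4 / (e*e) < real (Suc N)" using N by simp
        then show ?thesis using e by (simp add: field_simps)
      qed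
      ultimately have "(norm (X m - X n))\<^sup>2 < e\<^sup>2"
        using key[of m n] by (simp add: power2_eq_square)
      then show ?thesis using e by (simp add: dist_norm power_less_imp_less_base)
    qed
    then show "\<exists>M. \<forall>m\<ge>M. \<forall>n\<ge>M. dist (X m) (X n) < e" by blast
  qed
  then obtain m where lim: "X \<longlonglongrightarrow> m" using Cauchy_convergent_iff convergent_def by blast
  have mM: "m \<in> M" using closed_sequentially[OF cl] X(1) lim by blast
  have l1: "(\<lambda>n. (norm (y - X n))\<^sup>2) \<longlonglongrightarrow> (norm (y - m))\<^sup>2"
    by (intro tendsto_intros lim)
  have l2: "(\<lambda>n. d\<^sup>2 + 1 / real (Suc n)) \<longlonglongrightarrow> d\<^sup>2 + 0"
    by (intro tendsto_intros LIMSEQ_inverse_real_of_nat[unfolded inverse_eq_divide])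
  have "(norm (y - m))\<^sup>2 \<le> d\<^sup>2 + 0"
    using l1 l2 X(2) by (intro LIMSEQ_le[OF l1 l2]) (auto intro: less_imp_le)
  then have "(norm (y - m))\<^sup>2 \<le> (norm (y - m'))\<^sup>2" if "m' \<in> M" for m'
    proof -
    have "d\<^sup>2 \<le> (norm (y - m'))\<^sup>2" using dle[OF that] d0 by (rule power_mono)
    then show ?thesis using \<open>(norm (y - m))\<^sup>2 \<le> d\<^sup>2 + 0\<close> by linarith
  qed
  then show ?thesis using mM by (intro bexI[of _ m]) (auto intro: min_orth[OF M mM])
qed

end




definition psC :: "(complex \<Rightarrow> 'a \<Rightarrow> 'a) \<Rightarrow> complex \<Rightarrow> 'a \<times> 'a \<Rightarrow> 'a \<times> 'a" where
  "psC sC c p = (sC c (fst p), sC c (snd p))"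

lemma prod_hilbert:
  fixes sC :: "complex \<Rightarrow> 'a::banach \<Rightarrow> 'a"
  assumes "complex_hilbert sC ip"
  shows "complex_hilbert (psC sC) (pip ip)"
proof -
  interpret complex_hilbert sC ip by fact
  show ?thesis
  proof
    fix a b :: complex and x y z :: "'a \<times> 'a" and r :: real
    show "psC sC a (x + y) = psC sC a x + psC sC a y"
      by (simp add: psC_def sC_add_right)
    show "psC sC (a + b) x = psC sC a x + psC sC b x"
      by (simp add: psC_def sC_add_left)
    show "psC sC a (psC sC b x) = psC sC (a * b) x"
      by (simp add: psC_def sC_sC)
    show "psC sC 1 x = x"
      by (simp add: psC_def sC_one)
    show "psC sC (complex_of_real r) x = scaleR r x"
      by (simp add: psC_def sC_of_real prod_eq_iff)
    show "pip ip (x + y) z = pip ip x z + pip ip y z"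
      by (simp add: pip_def ip_add_left)
    show "pip ip (psC sC a x) y = a * pip ip x y"
      by (simp add: pip_def psC_def ip_sC_left algebra_simps)
    show "pip ip y x = cnj (pip ip x y)"
      unfolding pip_def using ip_sym[of "fst x" "fst y"] ip_sym[of "snd x" "snd y"] by simp
    show "pip ip x x = complex_of_real ((norm x)\<^sup>2)"
      unfolding pip_def by (simp add: ip_norm norm_prod_def)
  qed
qed

lemma lin_rel_subsp: "lin_rel sC T \<longleftrightarrow> subsp (psC sC) T"
  unfolding lin_rel_def subsp_def psC_def
  by (simp add: zero_prod_def plus_prod_def)

context complex_hilbert
begin

lemma radj_iff: "(f, g) \<in> radj ip T \<longleftrightarrow> (\<forall>x y. (x, y) \<in> T \<longrightarrow> ip g x = ip f y)"
  by (auto simp: radj_def)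

lemma radj_lin: "lin_rel sC (radj ip T)"
  unfolding lin_rel_def
  by (auto simp: radj_iff ip_add_left ip_add_right ip_sC_left)

lemma radj_radj:
  assumes T: "closed_lin_rel sC T"
  shows "radj ip (radj ip T) \<subseteq> T"
proof
  fix u assume u: "u \<in> radj ip (radj ip T)"
  interpret P: complex_hilbert "psC sC" "pip ip"
    by (rule prod_hilbert) (rule complex_hilbert_axioms)
  have S: "subsp (psC sC) T" and cl: "closed T"
    using T unfolding closed_lin_rel_def lin_rel_subsp by auto
  obtain t where tT: "t \<in> T" and orth: "\<And>q. q \<in> T \<Longrightarrow> pip ip (u - t) q = 0"
    using P.proj[OF S cl, of u] by blast
  obtain r1 r2 where r: "u - t = (r1, r2)" by (cases "u - t") auto
  have "(- r2, r1) \<in> radj ip T"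
    unfolding radj_def
  proof (clarsimp)
    fix x y assume "(x, y) \<in> T"
    then have "pip ip (u - t) (x, y) = 0" by (rule orth)
    then have "ip r1 x + ip r2 y = 0" by (simp add: r pip_def)
    then show "ip r1 x = ip (- r2) y" by (simp add: ip_minus_left eq_neg_iff_add_eq_0)
  qed
  with u have "ip (snd u) (- r2) = ip (fst u) r1"
    unfolding radj_def by (cases u) auto
  then have h: "ip (fst u) r1 = - ip (snd u) r2" by (simp add: ip_minus_right)
  then have pu: "pip ip u (u - t) = 0"
    by (simp add: r pip_def)
  have pt: "pip ip t (u - t) = 0"
    using P.ip_sym[of "u - t" t] orth[OF tT] by simp
  have "pip ip (u - t) (u - t) = 0"
    using pu pt by (simp add: P.ip_diff_left)
  then have "u = t" using P.ip_self_eq_0 by simp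
  then show "u \<in> T" using tT by simp
qed

lemma rmul_subsp:
  assumes B: "closed_lin_rel sC B"
  shows "subsp sC (rmul B)" "closed (rmul B)"
proof -
  have L: "lin_rel sC B" and cl: "closed B" using B by (auto simp: closed_lin_rel_def)
  show "subsp sC (rmul B)"
    using L unfolding lin_rel_def subsp_def rmul_def
    by (auto dest: bspec[where x="(0, _)"]) (metis fst_conv snd_conv add_0, metis fst_conv snd_conv sC_zero_right)
  have "rmul B = (\<lambda>y. (0, y)) -` B" by (auto simp: rmul_def)
  moreover have "closed ((\<lambda>y. (0::'a, y)) -` B)"
    by (rule continuous_closed_vimage[OF cl]) (intro continuous_intros)
  ultimately show "closed (rmul B)" by simp
qed


lemma mul_sub:
  assumes B: "closed_lin_rel sC B" and BA: "B \<subseteq> radj ip A"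
    and R: "rrestrict (rs ip (radj ip A)) (rdom B) = rs ip B"
    and I: "rmul (radj ip A) \<inter> rker (radj ip B) = {0}"
  shows "rmul (radj ip A) \<subseteq> rmul B"
proof
  fix y assume y: "y \<in> rmul (radj ip A)"
  have S: "subsp sC (rmul B)" and cl: "closed (rmul B)" using rmul_subsp[OF B] by auto
  have LB: "lin_rel sC B" using B by (simp add: closed_lin_rel_def)
  have LA: "lin_rel sC (radj ip A)" by (rule radj_lin)
  have addB: "p \<in> B \<Longrightarrow> q \<in> B \<Longrightarrow> p + q \<in> B" for p q
    using LB unfolding lin_rel_def by (metis plus_prod_def)
  have negB: "p \<in> B \<Longrightarrow> - p \<in> B" for p
    using LB unfolding lin_rel_def by (metis (no_types, lifting) sC_minus_one uminus_prod_def prod.collapse)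
  have addA: "p \<in> radj ip A \<Longrightarrow> q \<in> radj ip A \<Longrightarrow> p + q \<in> radj ip A" for p q
    using LA unfolding lin_rel_def by (metis plus_prod_def)
  have negA: "p \<in> radj ip A \<Longrightarrow> - p \<in> radj ip A" for p
    using LA unfolding lin_rel_def by (metis (no_types, lifting) sC_minus_one uminus_prod_def prod.collapse)
  obtain m where mB: "m \<in> rmul B" and morth: "\<And>z. z \<in> rmul B \<Longrightarrow> ip (y - m) z = 0"
    using proj[OF S cl, of y] by blast
  define r where "r = y - m"
  have "(0, y) \<in> radj ip A" using y by (simp add: rmul_def)
  moreover have "(0, - m) \<in> radj ip A"
    using negA[of "(0, m)"] BA mB by (auto simp: rmul_def)
  ultimately have r0: "(0, r) \<in> radj ip A" using addA[of "(0, y)" "(0, - m)"] by (simp add: r_def)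
  have "(r, 0) \<in> radj ip B"
    unfolding radj_iff
  proof (intro allI impI)
    fix x y' assume xy: "(x, y') \<in> B"
    obtain m' where m'B: "m' \<in> rmul B" and m'orth: "\<And>z. z \<in> rmul B \<Longrightarrow> ip (y' - m') z = 0"
      using proj[OF S cl, of y'] by blast
    define s where "s = y' - m'"
    have "(0, - m') \<in> B" using negB[of "(0, m')"] m'B by (simp add: rmul_def)
    then have xs: "(x, s) \<in> B" using addB[OF xy] by (fastforce simp: s_def)
    have "(x, s) \<in> rs ip B"
      unfolding rs_def rinf_def
    proof (intro CollectI conjI ballI xs)
      fix q assume "q \<in> {p \<in> B. fst p = 0}"
      then have "snd q \<in> rmul B" "fst q = 0" by (auto simp: rmul_def) (metis prod.collapse)
      then show "pip ip (x, s) q = 0" using m'orth by (simp add: pip_def s_def)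
    qed
    then have "(x, s) \<in> rs ip (radj ip A)" using R by (auto simp: rrestrict_def)
    then have "pip ip (x, s) (0, r) = 0" using r0 by (auto simp: rs_def rinf_def)
    then have "ip s r = 0" by (simp add: pip_def)
    then have "ip r s = 0" using ip_sym[of r s] by simp
    moreover have "ip r m' = 0" using morth[OF m'B] by (simp add: r_def)
    moreover have "y' = m' + s" by (simp add: s_def)
    ultimately show "ip 0 x = ip r y'" by (simp add: ip_add_right)
  qed
  then have "r \<in> rker (radj ip B)" by (simp add: rker_def)
  moreover have "r \<in> rmul (radj ip A)" using r0 by (simp add: rmul_def)
  ultimately have "r = 0" using I by blast
  then show "y \<in> rmul B" using mB by (simp add: r_def)
qed

end




lemma sum_delta_mult1:
  assumes "finite S" "x \<in> S"
  shows "(\<Sum>l\<in>S. c l * (if l = x then 1 else 0)) = (c x :: complex)"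
proof -
  have "(\<Sum>l\<in>S. c l * (if l = x then 1 else 0)) = (\<Sum>l\<in>S. if l = x then c l else 0)"
    by (rule sum.cong) auto
  also have "\<dots> = c x" using assms by simp
  finally show ?thesis .
qed

lemma sum_delta_mult2:
  assumes "finite S" "x \<in> S"
  shows "(\<Sum>l\<in>S. c l * (if x = l then 1 else 0)) = (c x :: complex)"
proof -
  have "(\<Sum>l\<in>S. c l * (if x = l then 1 else 0)) = (\<Sum>l\<in>S. if x = l then c l else 0)"
    by (rule sum.cong) auto
  also have "\<dots> = c x" using assms by simp
  finally show ?thesis .
qed

locale pairing = complex_hilbert sC ip
  for sC :: "complex \<Rightarrow> 'a::banach \<Rightarrow> 'a" and ip +
  fixes V W M :: "'a set" and phi :: "'a \<Rightarrow> 'a \<Rightarrow> complex"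
  assumes V: "subsp sC V" and W: "subsp sC W"
    and l1: "\<And>v1 v2 w. v1 \<in> V \<Longrightarrow> v2 \<in> V \<Longrightarrow> w \<in> W \<Longrightarrow> phi (v1 + v2) w = phi v1 w + phi v2 w"
    and l2: "\<And>c v w. v \<in> V \<Longrightarrow> w \<in> W \<Longrightarrow> phi (sC c v) w = c * phi v w"
    and r1: "\<And>v w1 w2. v \<in> V \<Longrightarrow> w1 \<in> W \<Longrightarrow> w2 \<in> W \<Longrightarrow> phi v (w1 + w2) = phi v w1 + phi v w2"
    and r2: "\<And>c v w. v \<in> V \<Longrightarrow> w \<in> W \<Longrightarrow> phi v (sC c w) = cnj c * phi v w"
    and nd: "\<And>v. v \<in> V \<Longrightarrow> (\<forall>w\<in>W. phi v w = 0) \<Longrightarrow> v \<in> M"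
begin

lemma phi_sumL:
  assumes "finite S" "\<And>i. i \<in> S \<Longrightarrow> f i \<in> V" "w \<in> W"
  shows "phi (\<Sum>i\<in>S. sC (c i) (f i)) w = (\<Sum>i\<in>S. c i * phi (f i) w)"
  using assms(1,2)
proof (induct S rule: finite_induct)
  case empty
  have "phi (0 + 0) w = phi 0 w + phi 0 w" using l1 subspD(1)[OF V] assms(3) by blast
  then show ?case by simp
next
  case (insert x F)
  have "(\<Sum>i\<in>F. sC (c i) (f i)) \<in> V"
    using insert by (intro subsp_sum[OF V] subspD(3)[OF V]) auto
  moreover have "sC (c x) (f x) \<in> V" using insert by (intro subspD(3)[OF V]) auto
  ultimately show ?case using insert assms(3) by (simp add: l1 l2)
qed

lemma phi_sumR:
  assumes "finite S" "\<And>i. i \<in> S \<Longrightarrow> g i \<in> W" "v \<in> V"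
  shows "phi v (\<Sum>i\<in>S. sC (c i) (g i)) = (\<Sum>i\<in>S. cnj (c i) * phi v (g i))"
  using assms(1,2)
proof (induct S rule: finite_induct)
  case empty
  have "phi v (0 + 0) = phi v 0 + phi v 0" using r1 subspD(1)[OF W] assms(3) by blast
  then show ?case by simp
next
  case (insert x F)
  have "(\<Sum>i\<in>F. sC (c i) (g i)) \<in> W"
    using insert by (intro subsp_sum[OF W] subspD(3)[OF W]) auto
  moreover have "sC (c x) (g x) \<in> W" using insert by (intro subspD(3)[OF W]) auto
  ultimately show ?case using insert assms(3) by (simp add: r1 r2)
qed

lemma indep_mod_insert:
  assumes "indep_mod sC M (insert a L)" "a \<notin> L"
  shows "indep_mod sC M L"
  unfolding indep_mod_def
proof (intro conjI allI impI ballI)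
  show "finite L" using assms(1) by (simp add: indep_mod_def)
  fix c l assume s: "(\<Sum>l\<in>L. sC (c l) l) \<in> M" and l: "l \<in> L"
  define c' where "c' = c(a := 0)"
  have "(\<Sum>x\<in>insert a L. sC (c' x) x) = (\<Sum>l\<in>L. sC (c' l) l)"
    using assms by (simp add: indep_mod_def c'_def)
  also have "\<dots> = (\<Sum>l\<in>L. sC (c l) l)"
    using assms(2) by (intro sum.cong) (auto simp: c'_def)
  finally have "(\<Sum>x\<in>insert a L. sC (c' x) x) \<in> M" using s by simp
  then have "c' l = 0" using assms(1) l unfolding indep_mod_def by blast
  then show "c l = 0" using l assms(2) by (auto simp: c'_def split: if_splits)
qed

lemma biorth:
  assumes "finite L"
  shows "L \<subseteq> V \<Longrightarrow> indep_mod sC M L \<Longrightarrow>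
    \<exists>w. (\<forall>l\<in>L. w l \<in> W) \<and> (\<forall>l\<in>L. \<forall>l'\<in>L. phi l (w l') = (if l = l' then 1 else 0))"
  using assms
proof (induct L rule: finite_induct)
  case empty then show ?case by simp
next
  case (insert a L)
  have LV: "L \<subseteq> V" and aV: "a \<in> V" using insert by auto
  have indL: "indep_mod sC M L" using indep_mod_insert insert by blast
  obtain w where wW: "\<And>l. l \<in> L \<Longrightarrow> w l \<in> W"
    and wd: "\<And>l l'. l \<in> L \<Longrightarrow> l' \<in> L \<Longrightarrow> phi l (w l') = (if l = l' then 1 else 0)"
    using insert(3)[OF LV indL] by blast
  define a' where "a' = a + (\<Sum>l\<in>L. sC (- phi a (w l)) l)"
  have a'V: "a' \<in> V" unfolding a'_def
    using LV aV by (intro subspD(2)[OF V] subsp_sum[OF V] subspD(3)[OF V]) auto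
  have a'w: "phi a' (w l0) = 0" if "l0 \<in> L" for l0
  proof -
    have sV: "(\<Sum>l\<in>L. sC (- phi a (w l)) l) \<in> V"
      using LV by (intro subsp_sum[OF V] subspD(3)[OF V]) auto
    have "phi a' (w l0) = phi a (w l0) + (\<Sum>l\<in>L. - phi a (w l) * phi l (w l0))"
      unfolding a'_def using l1[OF aV sV wW[OF that]] phi_sumL[OF insert(1), of id, simplified] LV wW[OF that]
      by (simp add: subset_eq)
    also have "\<dots> = phi a (w l0) + (\<Sum>l\<in>L. - phi a (w l) * (if l = l0 then 1 else 0))"
      using that by (intro arg_cong2[where f="(+)"] sum.cong refl) (auto simp: wd)
    also have "\<dots> = 0" using sum_delta_mult1[OF insert(1) that, of "\<lambda>l. - phi a (w l)"] by simp
    finally show ?thesis .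
  qed
  have a'M: "a' \<notin> M"
  proof
    assume a'M: "a' \<in> M"
    define c where "c = (\<lambda>x. if x = a then 1 else - phi a (w x))"
    have "(\<Sum>x\<in>insert a L. sC (c x) x) = sC 1 a + (\<Sum>l\<in>L. sC (c l) l)"
      using insert(1,2) by (simp add: c_def)
    also have "(\<Sum>l\<in>L. sC (c l) l) = (\<Sum>l\<in>L. sC (- phi a (w l)) l)"
      using insert(2) by (intro sum.cong) (auto simp: c_def)
    finally have "(\<Sum>x\<in>insert a L. sC (c x) x) = a'" by (simp add: a'_def sC_one)
    then have "c a = 0" using insert(5) a'M unfolding indep_mod_def by auto
    then show False by (simp add: c_def)
  qed
  then obtain z where zW: "z \<in> W" and z: "phi a' z \<noteq> 0" using nd[OF a'V] by blast
  define z1 where "z1 = sC (cnj (1 / phi a' z)) z"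
  have z1W: "z1 \<in> W" unfolding z1_def using zW by (rule subspD(3)[OF W])
  have a'z1: "phi a' z1 = 1" unfolding z1_def using r2[OF a'V zW] z by simp
  define z2 where "z2 = z1 + (\<Sum>l\<in>L. sC (cnj (- phi l z1)) (w l))"
  have sW: "(\<Sum>l\<in>L. sC (cnj (- phi l z1)) (w l)) \<in> W"
    using wW by (intro subsp_sum[OF W] subspD(3)[OF W]) auto
  have z2W: "z2 \<in> W" unfolding z2_def using z1W sW by (rule subspD(2)[OF W])
  have phz2: "phi v z2 = phi v z1 + (\<Sum>l\<in>L. - phi l z1 * phi v (w l))" if "v \<in> V" for v
    unfolding z2_def using r1[OF that z1W sW] phi_sumR[OF insert(1) wW that, where c="\<lambda>l. cnj (- phi l z1)"]
    by simp
  have lz2: "phi l0 z2 = 0" if "l0 \<in> L" for l0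
  proof -
    have l0V: "l0 \<in> V" using that LV by auto
    have "phi l0 z2 = phi l0 z1 + (\<Sum>l\<in>L. - phi l z1 * (if l0 = l then 1 else 0))"
      unfolding phz2[OF l0V] using that by (intro arg_cong2[where f="(+)"] sum.cong refl) (auto simp: wd)
    also have "\<dots> = 0" using sum_delta_mult2[OF insert(1) that, of "\<lambda>l. - phi l z1"] by simp
    finally show ?thesis .
  qed
  have a'z2: "phi a' z2 = 1"
    unfolding phz2[OF a'V] using a'z1 a'w by simp
  have az2: "phi a z2 = 1"
  proof -
    have sV: "(\<Sum>l\<in>L. sC (- phi a (w l)) l) \<in> V"
      using LV by (intro subsp_sum[OF V] subspD(3)[OF V]) auto
    have "phi a' z2 = phi a z2 + (\<Sum>l\<in>L. - phi a (w l) * phi l z2)"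
      unfolding a'_def using l1[OF aV sV z2W] phi_sumL[OF insert(1), of id, simplified] LV z2W
      by (simp add: subset_eq)
    also have "(\<Sum>l\<in>L. - phi a (w l) * phi l z2) = 0" by (simp add: lz2)
    finally show ?thesis using a'z2 by simp
  qed
  define w' where "w' = (\<lambda>x. if x = a then z2 else w x + sC (cnj (- phi a (w x))) z2)"
  have w'W: "\<forall>l\<in>insert a L. w' l \<in> W"
    using z2W wW unfolding w'_def by (auto intro!: subspD(2)[OF W] subspD(3)[OF W])
  have "phi l (w' l') = (if l = l' then 1 else 0)" if "l \<in> insert a L" "l' \<in> insert a L" for l l'
  proof (cases "l' = a")
    case True
    then show ?thesis using that az2 lz2 insert(2) by (auto simp: w'_def)
  next
    case False
    then have l'L: "l' \<in> L" using that by auto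
    have lV: "l \<in> V" using that insert by auto
    have "phi l (w' l') = phi l (w l') + (- phi a (w l')) * phi l z2"
      using False r1[OF lV wW[OF l'L] subspD(3)[OF W z2W]] r2[OF lV z2W] by (simp add: w'_def)
    then show ?thesis using that False az2 lz2 wd[OF _ l'L] insert(2) by auto
  qed
  then show ?case using w'W by blast
qed


lemma transfer:
  assumes ann: "\<And>v n. v \<in> V \<Longrightarrow> n \<in> N \<Longrightarrow> phi v n = 0"
    and LV: "L \<subseteq> V" and ind: "indep_mod sC M L"
  shows "\<exists>K \<subseteq> W. indep_mod sC N K \<and> card K = card L"
proof -
  have fin: "finite L" using ind by (simp add: indep_mod_def)
  obtain w where wW: "\<And>l. l \<in> L \<Longrightarrow> w l \<in> W"
    and wd: "\<And>l l'. l \<in> L \<Longrightarrow> l' \<in> L \<Longrightarrow> phi l (w l') = (if l = l' then 1 else 0)"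
    using biorth[OF fin LV ind] by blast
  have inj: "inj_on w L"
  proof (rule inj_onI)
    fix l l' assume "l \<in> L" "l' \<in> L" "w l = w l'"
    then have "phi l (w l) = phi l (w l')" by simp
    then show "l = l'" using wd \<open>l \<in> L\<close> \<open>l' \<in> L\<close> by (auto split: if_splits)
  qed
  have "indep_mod sC N (w ` L)"
    unfolding indep_mod_def
  proof (intro conjI allI impI ballI)
    show "finite (w ` L)" using fin by simp
    fix c k assume s: "(\<Sum>k\<in>w ` L. sC (c k) k) \<in> N" and k: "k \<in> w ` L"
    then obtain l0 where l0: "l0 \<in> L" "k = w l0" by blast
    have eq: "(\<Sum>k\<in>w ` L. sC (c k) k) = (\<Sum>l\<in>L. sC (c (w l)) (w l))"
      using sum.reindex[OF inj] by simp
    have l0V: "l0 \<in> V" using l0 LV by auto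
    have "0 = phi l0 (\<Sum>l\<in>L. sC (c (w l)) (w l))"
      using ann[OF l0V s] eq by simp
    also have "\<dots> = (\<Sum>l\<in>L. cnj (c (w l)) * phi l0 (w l))"
      by (rule phi_sumR[OF fin wW l0V])
    also have "\<dots> = (\<Sum>l\<in>L. cnj (c (w l)) * (if l0 = l then 1 else 0))"
      using l0 by (intro sum.cong) (auto simp: wd)
    also have "\<dots> = cnj (c (w l0))" by (rule sum_delta_mult2[OF fin l0(1)])
    finally show "c k = 0" using l0 by simp
  qed
  moreover have "w ` L \<subseteq> W" using wW by auto
  moreover have "card (w ` L) = card L" using card_image[OF inj] .
  ultimately show ?thesis by blast
qed

lemma quot_dim_le:
  assumes ann: "\<And>v n. v \<in> V \<Longrightarrow> n \<in> N \<Longrightarrow> phi v n = 0"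
  shows "quot_dim sC V M \<le> quot_dim sC W N"
  unfolding quot_dim_def
proof (rule Sup_subset_mono)
  show "{enat (card L) |L. L \<subseteq> V \<and> indep_mod sC M L} \<subseteq> {enat (card L) |L. L \<subseteq> W \<and> indep_mod sC N L}"
  proof
    fix x assume "x \<in> {enat (card L) |L. L \<subseteq> V \<and> indep_mod sC M L}"
    then obtain L where x: "x = enat (card L)" and LV: "L \<subseteq> V" and ind: "indep_mod sC M L" by blast
    obtain K where "K \<subseteq> W" "indep_mod sC N K" "card K = card L"
      using transfer[OF ann LV ind] by blast
    then show "x \<in> {enat (card L) |L. L \<subseteq> W \<and> indep_mod sC N L}"
      using x by (intro CollectI exI[of _ K]) simp
  qed
qed

end





lemma lin_rel_add: "lin_rel sC T \<Longrightarrow> (a, b) \<in> T \<Longrightarrow> (c, d) \<in> T \<Longrightarrow> (a + c, b + d) \<in> T"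
  unfolding lin_rel_def by (metis fst_conv snd_conv)

lemma lin_rel_sC: "lin_rel sC T \<Longrightarrow> (a, b) \<in> T \<Longrightarrow> (sC k a, sC k b) \<in> T"
  unfolding lin_rel_def by (metis fst_conv snd_conv)

context complex_hilbert
begin

lemma lin_rel_diff: "lin_rel sC T \<Longrightarrow> (a, b) \<in> T \<Longrightarrow> (c, d) \<in> T \<Longrightarrow> (a - c, b - d) \<in> T"
  using lin_rel_add[of sC T a b "sC (-1) c" "sC (-1) d"] lin_rel_sC[of sC T c d "-1"]
  by (simp add: sC_minus_one)

lemma rdom_subsp: assumes L: "lin_rel sC T" shows "subsp sC (rdom T)"
  unfolding subsp_def rdom_def
proof (intro conjI ballI allI)
  show "0 \<in> {x. \<exists>y. (x, y) \<in> T}" using L by (auto simp: lin_rel_def)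
  fix x y assume "x \<in> {x. \<exists>y. (x, y) \<in> T}" "y \<in> {x. \<exists>y. (x, y) \<in> T}"
  then show "x + y \<in> {x. \<exists>y. (x, y) \<in> T}" using lin_rel_add[OF L] by blast
next
  fix c x assume "x \<in> {x. \<exists>y. (x, y) \<in> T}"
  then show "sC c x \<in> {x. \<exists>y. (x, y) \<in> T}" using lin_rel_sC[OF L] by blast
qed

lemma adj_swap: "A \<subseteq> radj ip B \<Longrightarrow> B \<subseteq> radj ip A"
proof
  fix p assume AB: "A \<subseteq> radj ip B" and p: "p \<in> B"
  obtain x y where pxy: "p = (x, y)" by (cases p)
  have "ip y a = ip x b" if "(a, b) \<in> A" for a b
  proof -
    have "ip b x = ip a y" using AB that p pxy by (auto simp: radj_iff)
    then show ?thesis by (metis ip_sym)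
  qed
  then show "p \<in> radj ip A" using pxy by (simp add: radj_iff)
qed

end


theorem proposition2p5:
  fixes sC :: "complex \<Rightarrow> 'a::banach \<Rightarrow> 'a"
    and ip :: "'a \<Rightarrow> 'a \<Rightarrow> complex"
    and A B :: "('a \<times> 'a) set"
  assumes "complex_hilbert sC ip"
    and "closed_lin_rel sC A" and "closed_lin_rel sC B"
    and "dual_pair sC ip A B"
    and "rrestrict (rs ip (radj ip A)) (rdom B) = rs ip B"
    and "rrestrict (rs ip (radj ip B)) (rdom A) = rs ip A"
    and "rmul (radj ip B) \<inter> rker (radj ip A) = {0}"
    and "rmul (radj ip A) \<inter> rker (radj ip B) = {0}"
  shows "quot_dim sC (rdom (radj ip A)) (rdom B) = quot_dim sC (rdom (radj ip B)) (rdom A)"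
proof -
  interpret complex_hilbert sC ip by fact
  have hA: "closed_lin_rel sC A" and hB: "closed_lin_rel sC B" by fact+
  have LA: "lin_rel sC A" and LB: "lin_rel sC B" using hA hB by (auto simp: closed_lin_rel_def)
  have LAs: "lin_rel sC (radj ip A)" and LBs: "lin_rel sC (radj ip B)" by (rule radj_lin)+
  have AB: "A \<subseteq> radj ip B" using assms(4) by (simp add: dual_pair_def)
  have BA: "B \<subseteq> radj ip A" using adj_swap[OF AB] .
  have m1: "rmul (radj ip A) \<subseteq> rmul B" by (rule mul_sub[OF hB BA assms(5) assms(8)])
  have m2: "rmul (radj ip B) \<subseteq> rmul A" by (rule mul_sub[OF hA AB assms(6) assms(7)])
  define Phi where "Phi f g = ip (SOME f'. (f, f') \<in> radj ip A) g - ip f (SOME g'. (g, g') \<in> radj ip B)" for f g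
  have rep: "Phi f g = ip f' g - ip f g'" if f: "(f, f') \<in> radj ip A" and g: "(g, g') \<in> radj ip B" for f f' g g'
  proof -
    define F where "F = (SOME f'. (f, f') \<in> radj ip A)"
    define G where "G = (SOME g'. (g, g') \<in> radj ip B)"
    have F: "(f, F) \<in> radj ip A" unfolding F_def using f by (rule someI)
    have G: "(g, G) \<in> radj ip B" unfolding G_def using g by (rule someI)
    have "(f - f, F - f') \<in> radj ip A" by (rule lin_rel_diff[OF LAs F f])
    then have "F - f' \<in> rmul B" using m1 by (auto simp: rmul_def)
    then have "(0, F - f') \<in> B" by (simp add: rmul_def)
    then have "ip g' 0 = ip g (F - f')" using g unfolding radj_iff by blast
    then have "ip g (F - f') = 0" by simp
    then have "ip (F - f') g = 0" using ip_sym[of g "F - f'"] by simp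
    then have e1: "ip F g = ip f' g" by (simp add: ip_diff_left)
    have "(g - g, G - g') \<in> radj ip B" by (rule lin_rel_diff[OF LBs G g])
    then have "G - g' \<in> rmul A" using m2 by (auto simp: rmul_def)
    then have "(0, G - g') \<in> A" by (simp add: rmul_def)
    then have "ip f' 0 = ip f (G - g')" using f unfolding radj_iff by blast
    then have e2: "ip f G = ip f g'" by (simp add: ip_diff_right)
    show ?thesis unfolding Phi_def F_def[symmetric] G_def[symmetric] e1 e2 ..
  qed
  define V where "V = rdom (radj ip A)"
  define W where "W = rdom (radj ip B)"
  have V: "subsp sC V" unfolding V_def by (rule rdom_subsp[OF LAs])
  have W: "subsp sC W" unfolding W_def by (rule rdom_subsp[OF LBs])
  have exV: "\<exists>v'. (v, v') \<in> radj ip A" if "v \<in> V" for v using that by (simp add: V_def rdom_def)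
  have exW: "\<exists>v'. (v, v') \<in> radj ip B" if "v \<in> W" for v using that by (simp add: W_def rdom_def)
  have pl1: "Phi (v1 + v2) w = Phi v1 w + Phi v2 w" if hh: "v1 \<in> V" "v2 \<in> V" "w \<in> W" for v1 v2 w
  proof -
    obtain v1' v2' w' where a: "(v1, v1') \<in> radj ip A" "(v2, v2') \<in> radj ip A" "(w, w') \<in> radj ip B"
      using hh exV exW by meson
    show ?thesis using rep[OF lin_rel_add[OF LAs a(1,2)] a(3)] rep[OF a(1) a(3)] rep[OF a(2) a(3)]
      by (simp add: ip_add_left)
  qed
  have pl2: "Phi (sC c v) w = c * Phi v w" if hh: "v \<in> V" "w \<in> W" for c v w
  proof -
    obtain v' w' where a: "(v, v') \<in> radj ip A" "(w, w') \<in> radj ip B"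
      using hh exV exW by meson
    have "Phi (sC c v) w = ip (sC c v') w - ip (sC c v) w'" by (rule rep[OF lin_rel_sC[OF LAs a(1), where k=c] a(2)])
    also have "\<dots> = c * (ip v' w - ip v w')" by (simp add: ip_sC_left right_diff_distrib)
    also have "\<dots> = c * Phi v w" using rep[OF a(1) a(2)] by simp
    finally show ?thesis .
  qed
  have pr1: "Phi v (w1 + w2) = Phi v w1 + Phi v w2" if hh: "v \<in> V" "w1 \<in> W" "w2 \<in> W" for v w1 w2
  proof -
    obtain v' w1' w2' where a: "(v, v') \<in> radj ip A" "(w1, w1') \<in> radj ip B" "(w2, w2') \<in> radj ip B"
      using hh exV exW by meson
    show ?thesis using rep[OF a(1) lin_rel_add[OF LBs a(2,3)]] rep[OF a(1) a(2)] rep[OF a(1) a(3)]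
      by (simp add: ip_add_right)
  qed
  have pr2: "Phi v (sC c w) = cnj c * Phi v w" if hh: "v \<in> V" "w \<in> W" for c v w
  proof -
    obtain v' w' where a: "(v, v') \<in> radj ip A" "(w, w') \<in> radj ip B"
      using hh exV exW by meson
    have "Phi v (sC c w) = ip v' (sC c w) - ip v (sC c w')" by (rule rep[OF a(1) lin_rel_sC[OF LBs a(2), where k=c]])
    also have "\<dots> = cnj c * (ip v' w - ip v w')" by (simp add: ip_sC_right right_diff_distrib)
    also have "\<dots> = cnj c * Phi v w" using rep[OF a(1) a(2)] by simp
    finally show ?thesis .
  qed
  have nd1: "v \<in> rdom B" if hh: "v \<in> V" "\<forall>w\<in>W. Phi v w = 0" for v
  proof -
    obtain v' where a: "(v, v') \<in> radj ip A" using hh(1) exV by blast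
    have "(v, v') \<in> radj ip (radj ip B)"
    proof (rule radj_iff[THEN iffD2], intro allI impI)
      fix g g' assume g: "(g, g') \<in> radj ip B"
      then have "g \<in> W" by (auto simp: W_def rdom_def)
      then have "Phi v g = 0" using hh by blast
      then show "ip v' g = ip v g'" using rep[OF a g] by simp
    qed
    then have "(v, v') \<in> B" using radj_radj[OF hB] by blast
    then show ?thesis by (auto simp: rdom_def)
  qed
  have nd2: "g \<in> rdom A" if hh: "g \<in> W" "\<forall>f\<in>V. cnj (Phi f g) = 0" for g
  proof -
    obtain g' where a: "(g, g') \<in> radj ip B" using hh(1) exW by blast
    have "(g, g') \<in> radj ip (radj ip A)"
    proof (rule radj_iff[THEN iffD2], intro allI impI)
      fix f f' assume f: "(f, f') \<in> radj ip A"
      then have "f \<in> V" by (auto simp: V_def rdom_def)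
      then have "Phi f g = 0" using hh by simp
      then have "ip f' g = ip f g'" using rep[OF f a] by simp
      then show "ip g' f = ip g f'" by (metis ip_sym)
    qed
    then have "(g, g') \<in> A" using radj_radj[OF hA] by blast
    then show ?thesis by (auto simp: rdom_def)
  qed
  have ann1: "Phi v n = 0" if hh: "v \<in> V" "n \<in> rdom A" for v n
  proof -
    obtain v' n' where a: "(v, v') \<in> radj ip A" "(n, n') \<in> A"
      using hh(1) exV hh(2) unfolding rdom_def by blast
    have b: "(n, n') \<in> radj ip B" using a(2) AB by blast
    have "ip v' n = ip v n'" using a by (simp add: radj_iff)
    then show ?thesis using rep[OF a(1) b] by simp
  qed
  have ann2: "cnj (Phi g m) = 0" if hh: "m \<in> W" "g \<in> rdom B" for g m
  proof -
    obtain m' g' where a: "(m, m') \<in> radj ip B" "(g, g') \<in> B"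
      using hh(1) exW hh(2) unfolding rdom_def by blast
    have b: "(g, g') \<in> radj ip A" using a(2) BA by blast
    have "ip m' g = ip m g'" using a by (simp add: radj_iff)
    then have "ip g m' = ip g' m" by (metis ip_sym)
    then show ?thesis using rep[OF b a(1)] by simp
  qed
  interpret P1: pairing sC ip V W "rdom B" Phi
    by (unfold_locales; (rule V W pl1 pl2 pr1 pr2 nd1; assumption)?)
  interpret P2: pairing sC ip W V "rdom A" "\<lambda>g f. cnj (Phi f g)"
  proof unfold_locales
    show "subsp sC W" "subsp sC V" by (rule W, rule V)
  next
    fix v1 v2 w assume "v1 \<in> W" "v2 \<in> W" "w \<in> V"
    then show "cnj (Phi w (v1 + v2)) = cnj (Phi w v1) + cnj (Phi w v2)" by (simp add: pr1)
  next
    fix c v w assume "v \<in> W" "w \<in> V"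
    then show "cnj (Phi w (sC c v)) = c * cnj (Phi w v)" by (simp add: pr2)
  next
    fix v w1 w2 assume "v \<in> W" "w1 \<in> V" "w2 \<in> V"
    then show "cnj (Phi (w1 + w2) v) = cnj (Phi w1 v) + cnj (Phi w2 v)" by (simp add: pl1)
  next
    fix c v w assume "v \<in> W" "w \<in> V"
    then show "cnj (Phi (sC c w) v) = cnj c * cnj (Phi w v)" by (simp add: pl2)
  next
    fix v assume "v \<in> W" "\<forall>w\<in>V. cnj (Phi w v) = 0"
    then show "v \<in> rdom A" by (rule nd2)
  qed
  have "quot_dim sC V (rdom B) \<le> quot_dim sC W (rdom A)"
    by (rule P1.quot_dim_le) (rule ann1)
  moreover have "quot_dim sC W (rdom A) \<le> quot_dim sC V (rdom B)"
    by (rule P2.quot_dim_le) (rule ann2)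
  ultimately show ?thesis unfolding V_def W_def by (rule antisym)
qed


end
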